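(* In the two-type setting, suppose $\phi_1\sigma>1$. Then for every $M>0$ there is $\bar k\in\mathbb N$ such that for every $q^0_2\in[0,\bar p_2]$ there is $0\le k\le\bar k$ with $$\prod_{j=0}^{k-1}\phi_1\psi(\beta_2q^j_2)>M,$$ where $q^j_2$ is the second coordinate of $h^j(0,q^0_2)$.
   Context: Two-type limiting map: $\beta_1,\beta_2>0$, $\alpha(1),\alpha(2)\in[0,1)$, $\phi_i=(1-\alpha(i))\beta_i$. For $p\in[0,1]^2$, $S(p)=\beta_1p_1+\beta_2p_2$ and $f^{(i)}(p)=(1-e^{-S(p)})\beta_ip_i/S(p)$ ($=0$ if $S(p)=0$). For $\alpha\in(0,1)$ let $g_\alpha(x)=\frac{(1-\sqrt{1-4(1-\alpha)x(1-x)})^3}{8(1-\alpha)^2x^2}$ for $x\in(0,1]$ and $g_\alpha(0)=0$; let $g_0(x)=x$ for $x\le1/2$ and $g_0(x)=(1-x)^3/x^2$ for $x>1/2$. $h(p)=(h_1(p),h_2(p))$ with $h_i(p)=g_{\alpha(i)}(f^{(i)}(p))$; note $h(0,x)=(0,g_{\alpha(2)}(1-e^{-\beta_2x}))$. $\bar p_i=\sup_{x\in[0,1]}g_{\alpha(i)}(x)$. $\psi(x)=(1-e^{-x})/x$, $\psi(0)=1$. For $x\in[0,1]$ let $\Psi_n(x)=\big(\prod_{k=0}^{n-1}\psi(\beta_2h^k_2(0,x))\big)^{1/n}$, $\underline\Psi(x)=\liminf_{n\to\infty}\Psi_n(x)$, and $\sigma=\inf_{x\in[0,\bar p_2]}\underline\Psi(x)$.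 *)

theory Defs
  imports "HOL-Analysis.Analysis" "HOL-Library.Liminf_Limsup"
begin

definition gfun :: "real \<Rightarrow> real \<Rightarrow> real" where
  "gfun a x =
     (if a = 0 then (if x \<le> 1/2 then x else (1 - x)^3 / x^2)
      else (if x = 0 then 0
            else (1 - sqrt (1 - 4 * (1 - a) * x * (1 - x)))^3 / (8 * (1 - a)^2 * x^2)))"

definition psi :: "real \<Rightarrow> real" where
  "psi x = (if x = 0 then 1 else (1 - exp (- x)) / x)"

definition Ssum :: "real \<Rightarrow> real \<Rightarrow> real \<times> real \<Rightarrow> real" where
  "Ssum b1 b2 p = b1 * fst p + b2 * snd p"

definition fcomp :: "real \<Rightarrow> real \<Rightarrow> real \<Rightarrow> real \<Rightarrow> real \<times> real \<Rightarrow> real" where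
  "fcomp b1 b2 bi xi p =
     (if Ssum b1 b2 p = 0 then 0
      else (1 - exp (- Ssum b1 b2 p)) * bi * xi / Ssum b1 b2 p)"

definition hmap :: "real \<Rightarrow> real \<Rightarrow> real \<Rightarrow> real \<Rightarrow> real \<times> real \<Rightarrow> real \<times> real" where
  "hmap b1 b2 a1 a2 p =
     (gfun a1 (fcomp b1 b2 b1 (fst p) p), gfun a2 (fcomp b1 b2 b2 (snd p) p))"

definition pbar :: "real \<Rightarrow> real" where
  "pbar a = (SUP x\<in>{0..1}. gfun a x)"

definition Psi_n :: "real \<Rightarrow> real \<Rightarrow> real \<Rightarrow> real \<Rightarrow> nat \<Rightarrow> real \<Rightarrow> real" where
  "Psi_n b1 b2 a1 a2 n x =
     (\<Prod>k<n. psi (b2 * snd ((hmap b1 b2 a1 a2 ^^ k) (0, x)))) powr (1 / real n)"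

definition Psi_liminf :: "real \<Rightarrow> real \<Rightarrow> real \<Rightarrow> real \<Rightarrow> real \<Rightarrow> ereal" where
  "Psi_liminf b1 b2 a1 a2 x = liminf (\<lambda>n. ereal (Psi_n b1 b2 a1 a2 n x))"

definition sigma :: "real \<Rightarrow> real \<Rightarrow> real \<Rightarrow> real \<Rightarrow> ereal" where
  "sigma b1 b2 a1 a2 = (INF x\<in>{0..pbar a2}. Psi_liminf b1 b2 a1 a2 x)"

end

theory Submission
  imports Defs
begin

lemma gfun_alt:
  assumes "0 < a" "a < 1"
  shows "gfun a x = 8*(1-a)*x*(1-x)^3/(1+sqrt(1-4*(1-a)*x*(1-x)))^3"
proof (cases "x = 0")
  case True thus ?thesis using assms by (simp add: gfun_def)
next
  case False
  define u where "u = 4*(1-a)*x*(1-x)"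
  have xx: "x*(1-x) \<le> 1/4"
  proof -
    have "0 \<le> (x - 1/2)^2" by simp
    thus ?thesis by (simp add: power2_eq_square algebra_simps)
  qed
  have "(1-a)*(x*(1-x)) \<le> (1-a)*(1/4)" using xx assms by (intro mult_left_mono) auto
  hence "u \<le> 1 - a" unfolding u_def by (simp add: algebra_simps)
  hence u1: "0 \<le> 1 - u" using assms by linarith
  define s where "s = sqrt (1 - u)"
  have s0: "0 \<le> s" unfolding s_def using u1 by simp
  have ss: "s^2 = 1 - u" unfolding s_def using u1 by simp
  have "(1 - s)*(1+s) = u" using ss by (simp add: algebra_simps power2_eq_square)
  hence "1 - s = u/(1+s)" using s0 by (simp add: eq_divide_eq)
  hence "(1 - s)^3 = u^3/(1+s)^3" by (simp add: power_divide)
  hence "gfun a x = u^3/(1+s)^3/(8*(1-a)^2*x^2)"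
    using assms False by (simp add: gfun_def s_def u_def)
  also have "\<dots> = (u^3/(8*(1-a)^2*x^2))/(1+s)^3" by simp
  also have "u^3/(8*(1-a)^2*x^2) = 8*(1-a)*x*(1-x)^3"
  proof -
    have "u^3 = (8*(1-a)*x*(1-x)^3) * (8*(1-a)^2*x^2)"
      unfolding u_def by (simp add: power_mult_distrib power2_eq_square power3_eq_cube algebra_simps)
    thus ?thesis using assms False by (simp add: divide_eq_eq)
  qed
  finally show ?thesis by (simp add: s_def u_def)
qed

lemma arg_nonneg:
  fixes a x :: real
  assumes "0 \<le> a" "a < 1"
  shows "0 \<le> 1-4*(1-a)*x*(1-x)"
proof -
  have xx: "x*(1-x) \<le> 1/4"
  proof -
    have "0 \<le> (x - 1/2)^2" by simp
    thus ?thesis by (simp add: power2_eq_square algebra_simps)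
  qed
  have "(1-a)*(x*(1-x)) \<le> (1-a)*(1/4)" using xx assms by (intro mult_left_mono) auto
  thus ?thesis using assms by (simp add: algebra_simps)
qed

lemma gfun_cont:
  assumes "0 \<le> a" "a < 1"
  shows "continuous_on UNIV (gfun a)"
proof (cases "a = 0")
  case True
  have "gfun a = (\<lambda>x. if x \<le> 1/2 then x else (1 - x)^3 / x^2)"
    using True by (simp add: gfun_def fun_eq_iff)
  moreover have "continuous_on UNIV (\<lambda>x::real. if x \<le> 1/2 then x else (1 - x)^3 / x^2)"
  proof (rule continuous_on_cases_le)
    show "continuous_on {x \<in> UNIV. 1/2 \<le> x} (\<lambda>x::real. (1 - x)^3 / x^2)"
      by (intro continuous_intros) auto
  next
    fix x :: real assume "x \<in> UNIV" "x = 1/2"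
    hence h: "x = 1/2" by simp
    show "x = (1 - x)^3 / x^2" unfolding h by (simp add: power2_eq_square power3_eq_cube)
  qed (auto intro!: continuous_intros)
  ultimately show ?thesis by simp
next
  case False
  hence a: "0 < a" using assms by simp
  have geq: "gfun a = (\<lambda>x. 8*(1-a)*x*(1-x)^3/(1+sqrt(1-4*(1-a)*x*(1-x)))^3)"
    using gfun_alt[OF a assms(2)] by (simp add: fun_eq_iff)
  have pos: "1+sqrt(1-4*(1-a)*x*(1-x)) \<noteq> 0" for x
  proof -
    have "0 \<le> sqrt(1-4*(1-a)*x*(1-x))" using arg_nonneg[OF assms] by simp
    thus ?thesis by linarith
  qed
  have "continuous_on UNIV (\<lambda>x. 8*(1-a)*x*(1-x)^3/(1+sqrt(1-4*(1-a)*x*(1-x)))^3)"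
  proof -
    have pos2: "1 + sqrt (1 - (4 - 4 * a) * x * (1 - x)) \<noteq> 0" for x
      using pos[of x] by (simp add: algebra_simps)
    show ?thesis by (rule continuous_intros | simp add: pos2)+
  qed
  thus ?thesis using geq by simp
qed

lemma psi_pos: "psi x > 0"
proof (cases "x = 0")
  case False
  show ?thesis
  proof (cases "x > 0")
    case True thus ?thesis by (simp add: psi_def divide_pos_pos)
  next
    case f: False
    hence "x < 0" using False by simp
    moreover have "exp (-x) > 1" using \<open>x < 0\<close> by simp
    ultimately show ?thesis using False by (simp add: psi_def divide_neg_neg)
  qed
qed (simp add: psi_def)

lemma psi_cont: "continuous_on UNIV psi"
proof -
  have "isCont psi x" for x
  proof (cases "x = 0")
    case True
    have "((\<lambda>y::real. 1 - exp (-y)) has_field_derivative 1) (at 0)"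
      by (auto intro!: derivative_eq_intros)
    hence "((\<lambda>y. ((1 - exp (-y)) - (1 - exp (-0))) / (y - 0)) \<longlongrightarrow> 1) (at (0::real))"
      by (simp add: has_field_derivative_iff)
    hence "((\<lambda>y. (1 - exp (-y)) / y) \<longlongrightarrow> 1) (at (0::real))" by simp
    hence "(psi \<longlongrightarrow> 1) (at (0::real))"
    proof (rule Lim_transform_eventually)
      show "\<forall>\<^sub>F y in at 0. (1 - exp (-y)) / y = psi y"
        by (auto simp: psi_def eventually_at_filter)
    qed
    thus ?thesis using True by (simp add: isCont_def psi_def)
  next
    case False
    have "((\<lambda>y. (1 - exp (-y)) / y) \<longlongrightarrow> (1 - exp (-x)) / x) (at x)"
      using False by (intro tendsto_intros) auto
    hence "(psi \<longlongrightarrow> (1 - exp (-x)) / x) (at x)"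
    proof (rule Lim_transform_eventually)
      have "\<forall>\<^sub>F y in at x. y \<noteq> 0"
        using tendsto_imp_eventually_ne[OF tendsto_ident_at False] .
      thus "\<forall>\<^sub>F y in at x. (1 - exp (-y)) / y = psi y"
        by (rule eventually_mono) (simp add: psi_def)
    qed
    thus ?thesis using False by (simp add: isCont_def psi_def)
  qed
  thus ?thesis by (simp add: continuous_at_imp_continuous_on)
qed

lemma funpow_cont: "continuous_on UNIV (f::real\<Rightarrow>real) \<Longrightarrow> continuous_on UNIV (f^^n)"
proof (induction n)
  case (Suc n)
  hence "continuous_on UNIV (f \<circ> (f^^n))"
    by (intro continuous_on_compose) (auto intro: continuous_on_subset)
  thus ?case by simp
qed (simp add: continuous_on_id)

lemma gfun_zero: "gfun a 0 = 0" by (simp add: gfun_def)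

lemma hmap_axis:
  assumes "b2 > 0"
  shows "hmap b1 b2 a1 a2 (0, y) = (0, gfun a2 (1 - exp (- (b2 * y))))"
proof (cases "y = 0")
  case True thus ?thesis by (simp add: hmap_def fcomp_def Ssum_def gfun_zero)
next
  case False
  thus ?thesis using assms by (simp add: hmap_def fcomp_def Ssum_def gfun_zero)
qed

lemma hmap_iter:
  assumes "b2 > 0"
  shows "(hmap b1 b2 a1 a2 ^^ j) (0, q) = (0, ((\<lambda>y. gfun a2 (1 - exp (- (b2 * y)))) ^^ j) q)"
  by (induction j) (simp_all add: hmap_axis[OF assms])

theorem mainTheorem18:
  fixes b1 b2 a1 a2 :: real
  assumes "b1 > 0" and "b2 > 0"
    and "0 \<le> a1" and "a1 < 1" and "0 \<le> a2" and "a2 < 1"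
    and "ereal ((1 - a1) * b1) * sigma b1 b2 a1 a2 > 1"
  shows "\<forall>M > 0. \<exists>kbar :: nat. \<forall>q0 \<in> {0..pbar a2}. \<exists>k \<le> kbar.
           (\<Prod>j<k. (1 - a1) * b1 * psi (b2 * snd ((hmap b1 b2 a1 a2 ^^ j) (0, q0)))) > M"
proof (intro allI impI)
  fix M :: real assume M: "M > 0"
  define phi where "phi = (1 - a1) * b1"
  have phi: "phi > 0" using assms unfolding phi_def by simp
  define T where "T = (\<lambda>y. gfun a2 (1 - exp (- (b2 * y))))"
  define F where "F = (\<lambda>k q. \<Prod>j<k. phi * psi (b2 * (T^^j) q))"
  have Feq: "(\<Prod>j<k. (1 - a1) * b1 * psi (b2 * snd ((hmap b1 b2 a1 a2 ^^ j) (0, q)))) = F k q" for k q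
    unfolding F_def phi_def T_def using hmap_iter[OF assms(2)] by simp
  have Tc: "continuous_on UNIV T"
    unfolding T_def
    by (rule continuous_on_compose2[OF gfun_cont[OF assms(5,6)]]) (auto intro!: continuous_intros)
  have Fc: "continuous_on UNIV (F k)" for k
    unfolding F_def
    by (intro continuous_intros continuous_on_compose2[OF psi_cont] funpow_cont[OF Tc]) auto
  have point: "\<exists>k. F k q > M" if q: "q \<in> {0..pbar a2}" for q
  proof -
    define L where "L = Psi_liminf b1 b2 a1 a2 q"
    have "sigma b1 b2 a1 a2 \<le> L" unfolding L_def sigma_def using q by (rule INF_lower)
    hence "ereal phi * sigma b1 b2 a1 a2 \<le> ereal phi * L"
      using phi by (intro ereal_mult_left_mono) auto
    hence L1: "ereal phi * L > 1" using assms(7) unfolding phi_def by simp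
    have "ereal (1/phi) < L"
    proof (rule ccontr)
      assume "\<not> ereal (1/phi) < L"
      hence "L \<le> ereal (1/phi)" by simp
      hence "ereal phi * L \<le> ereal phi * ereal (1/phi)"
        using phi by (intro ereal_mult_left_mono) auto
      also have "\<dots> = 1" using phi by simp
      finally show False using L1 by simp
    qed
    then obtain c where c1: "ereal (1/phi) < ereal c" and c2: "ereal c < L"
      using ereal_dense2 by blast
    have c1': "1/phi < c" using c1 by simp
    hence cpos: "c > 0" using phi by (smt (verit) divide_pos_pos)
    have pc: "phi * c > 1" using c1' phi by (simp add: field_simps)
    have "eventually (\<lambda>n. ereal (Psi_n b1 b2 a1 a2 n q) > ereal c) sequentially"
      using c2 unfolding L_def Psi_liminf_def by (rule less_LiminfD)
    then obtain N where N: "\<And>n. n \<ge> N \<Longrightarrow> Psi_n b1 b2 a1 a2 n q > c"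
      unfolding eventually_sequentially by auto
    obtain m where m: "M < (phi * c) ^ m" using real_arch_pow[OF pc] by blast
    define n where "n = m + N + 1"
    define P where "P = (\<Prod>k<n. psi (b2 * snd ((hmap b1 b2 a1 a2 ^^ k) (0, q))))"
    have Ppos: "P > 0" unfolding P_def by (intro prod_pos) (simp add: psi_pos)
    have "c < P powr (1 / real n)" using N[of n] unfolding n_def Psi_n_def P_def by simp
    hence "c ^ n < (P powr (1 / real n)) ^ n"
      using cpos by (intro power_strict_mono) (auto simp: n_def)
    also have "(P powr (1 / real n)) ^ n = P"
    proof -
      have "(P powr (1 / real n)) ^ n = (P powr (1 / real n)) powr (real n)"
        using Ppos by (simp add: powr_realpow)
      also have "\<dots> = P" using Ppos by (simp add: powr_powr n_def)
      finally show ?thesis .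
    qed
    finally have cP: "c ^ n < P" .
    have "F n q = phi ^ n * P"
      unfolding F_def P_def using hmap_iter[OF assms(2)]
      by (simp add: prod.distrib T_def)
    also have "\<dots> > phi ^ n * c ^ n" using cP phi by simp
    finally have "F n q > (phi * c) ^ n" by (simp add: power_mult_distrib)
    moreover have "(phi * c) ^ m \<le> (phi * c) ^ n"
      using pc by (intro power_increasing) (auto simp: n_def)
    ultimately show ?thesis using m by (intro exI[of _ n]) linarith
  qed
  have "compact {0..pbar a2}" by simp
  then obtain C where C: "finite C" "{0..pbar a2} \<subseteq> (\<Union>k\<in>C. {q. M < F k q})"
  proof (rule compactE_image[where C = UNIV and f = "\<lambda>k. {q. M < F k q}"])
    show "open {q. M < F k q}" for k
      using open_Collect_less[OF continuous_on_const Fc] .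
    show "{0..pbar a2} \<subseteq> (\<Union>k\<in>UNIV. {q. M < F k q})" using point by blast
  qed auto
  have main: "\<forall>q0 \<in> {0..pbar a2}. \<exists>k \<le> Max (insert 0 C). M < F k q0"
  proof
    fix q0 assume "q0 \<in> {0..pbar a2}"
    then obtain k where k: "k \<in> C" "M < F k q0" using C(2) by blast
    have "k \<le> Max (insert 0 C)" using C(1) k(1) by simp
    thus "\<exists>k \<le> Max (insert 0 C). M < F k q0" using k(2) by blast
  qed
  show "\<exists>kbar :: nat. \<forall>q0 \<in> {0..pbar a2}. \<exists>k \<le> kbar.
           (\<Prod>j<k. (1 - a1) * b1 * psi (b2 * snd ((hmap b1 b2 a1 a2 ^^ j) (0, q0)))) > M"
    unfolding Feq using main by blast
qed

end
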